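(* Let $T_l$ be a $2m$ deck-shuffler IET and $H_l$ as below. For $C\subset[0,1)$ let $J(C)$ denote the closed convex hull of $H_l(C)$ in $\mathbb{R}$. For sets $X,Y\subset\mathbb{R}$ write $X<Y$ if $x<y$ for all $x\in X$, $y\in Y$. Then: (i) if $1\le i\le m-1$ and $H_l(A_i)$ is a single point, then $J(B_i)-\tfrac12<J(A_i)$ or $J(A_i)<J(B_{i+1})-\tfrac12$; (ii) if $2\le i\le m$ and $H_l(B_i)$ is a single point, then $J(A_{i-1})+\tfrac12<J(B_i)$ or $J(B_i)<J(A_i)+\tfrac12$; (iii) if $H_l(A_m\cup B_1)$ is a single point, then $J(B_m)-\tfrac12<J(A_m\cup B_1)$ or $J(A_m\cup B_1)<J(A_1)+\tfrac12$.
   Context: A $2m$ deck-shuffler IET $T_l$ is the map $[0,1)\to[0,1)$ determined by a length vector $l$ giving a partition of $[0,1)$ into consecutive left-closed right-open intervals $A_1<\dots<A_m<B_1<\dots<B_m$ of positive lengths, with $T_l(x)=x+|B_1|+\dots+|B_i|$ for $x\in A_i$ and $T_l(x)=x-|A_i|-\dots-|A_m|$ for $x\in B_i$. $B=B_1\cup\dots\cup B_m$ and $H_l(x)=\sum_{n=0}^\infty \chi_B(T_l^n x)/2^{n+1}$. For a set $X$ and $c\in\mathbb{R}$, $X+c=\{x+c:x\in X\}$. *)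

theory Defs
  imports "HOL-Analysis.Analysis"
begin

text \<open>Length vector l: indices 1..2m; |A_i| = l i, |B_i| = l (m+i), for 1 <= i <= m.\<close>

definition dsl_valid :: "nat \<Rightarrow> (nat \<Rightarrow> real) \<Rightarrow> bool" where
  "dsl_valid m l \<longleftrightarrow> m \<ge> 1 \<and> (\<forall>j\<in>{1..2*m}. l j > 0) \<and> (\<Sum>j=1..2*m. l j) = 1"

definition dsl_int :: "(nat \<Rightarrow> real) \<Rightarrow> nat \<Rightarrow> real set" where
  "dsl_int l j = {(\<Sum>k=1..<j. l k) ..< (\<Sum>k=1..<j. l k) + l j}"

definition dsl_A :: "nat \<Rightarrow> (nat \<Rightarrow> real) \<Rightarrow> nat \<Rightarrow> real set" where
  "dsl_A m l i = dsl_int l i"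

definition dsl_B :: "nat \<Rightarrow> (nat \<Rightarrow> real) \<Rightarrow> nat \<Rightarrow> real set" where
  "dsl_B m l i = dsl_int l (m + i)"

definition dsl_Bset :: "nat \<Rightarrow> (nat \<Rightarrow> real) \<Rightarrow> real set" where
  "dsl_Bset m l = (\<Union>i\<in>{1..m}. dsl_B m l i)"

text \<open>The deck-shuffler IET; points outside [0,1) are left fixed (irrelevant).\<close>
definition dsl_T :: "nat \<Rightarrow> (nat \<Rightarrow> real) \<Rightarrow> real \<Rightarrow> real" where
  "dsl_T m l x =
     (if \<exists>i\<in>{1..m}. x \<in> dsl_A m l i
      then x + (\<Sum>k=1..(THE i. i\<in>{1..m} \<and> x \<in> dsl_A m l i). l (m + k))
      else if \<exists>i\<in>{1..m}. x \<in> dsl_B m l i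
      then x - (\<Sum>k=(THE i. i\<in>{1..m} \<and> x \<in> dsl_B m l i)..m. l k)
      else x)"

definition dsl_H :: "nat \<Rightarrow> (nat \<Rightarrow> real) \<Rightarrow> real \<Rightarrow> real" where
  "dsl_H m l x = (\<Sum>n. indicator (dsl_Bset m l) ((dsl_T m l ^^ n) x) / 2 ^ (n + 1))"

definition dsl_J :: "nat \<Rightarrow> (nat \<Rightarrow> real) \<Rightarrow> real set \<Rightarrow> real set" where
  "dsl_J m l C = closure (convex hull (dsl_H m l ` C))"

definition set_less :: "real set \<Rightarrow> real set \<Rightarrow> bool" where
  "set_less X Y \<longleftrightarrow> (\<forall>x\<in>X. \<forall>y\<in>Y. x < y)"

definition set_shift :: "real set \<Rightarrow> real \<Rightarrow> real set" where
  "set_shift X c = (\<lambda>x. x + c) ` X"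

end

theory Submission
  imports Defs
begin


definition al :: "(nat \<Rightarrow> real) \<Rightarrow> nat \<Rightarrow> real" where
  "al l i = (\<Sum>k=1..<i. l k)"
definition be :: "nat \<Rightarrow> (nat \<Rightarrow> real) \<Rightarrow> nat \<Rightarrow> real" where
  "be m l i = (\<Sum>k=1..<i. l (m+k))"

lemma lpos: "dsl_valid m l \<Longrightarrow> 1 \<le> k \<Longrightarrow> k \<le> 2*m \<Longrightarrow> l k > 0"
  unfolding dsl_valid_def by auto

lemma al_Suc: "1 \<le> i \<Longrightarrow> al l (Suc i) = al l i + l i"
  unfolding al_def by (simp add: sum.atLeastLessThan_Suc)

lemma be_Suc: "1 \<le> i \<Longrightarrow> be m l (Suc i) = be m l i + l (m+i)"
  unfolding be_def by (simp add: sum.atLeastLessThan_Suc)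

lemma al_mono: assumes "dsl_valid m l" "i \<le> i'" "i' \<le> 2*m+1"
  shows "al l i \<le> al l i'"
  unfolding al_def
  by (rule sum_mono2) (use assms lpos[OF assms(1)] in \<open>auto intro: less_imp_le\<close>)

lemma be_mono: assumes "dsl_valid m l" "i \<le> i'" "i' \<le> m+1"
  shows "be m l i \<le> be m l i'"
  unfolding be_def
  by (rule sum_mono2) (use assms lpos[OF assms(1)] in \<open>auto intro: less_imp_le\<close>)

lemma al_strict: assumes "dsl_valid m l" "1 \<le> i" "i \<le> 2*m" shows "al l i < al l (Suc i)"
  using al_Suc[OF assms(2)] lpos[OF assms(1) assms(2) assms(3)] by simp

lemma be_strict: assumes "dsl_valid m l" "1 \<le> i" "i \<le> m" shows "be m l i < be m l (Suc i)"
  using be_Suc[OF assms(2)] lpos[OF assms(1), of "m+i"] assms by simp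

lemma al_1[simp]: "al l 1 = 0" unfolding al_def by simp
lemma be_1[simp]: "be m l 1 = 0" unfolding be_def by simp

lemma al_nonneg: "dsl_valid m l \<Longrightarrow> i \<le> 2*m+1 \<Longrightarrow> 0 \<le> al l i"
  unfolding al_def using lpos[of m l] by (intro sum_nonneg) (auto intro: less_imp_le)
lemma be_nonneg: "dsl_valid m l \<Longrightarrow> i \<le> m+1 \<Longrightarrow> 0 \<le> be m l i"
  unfolding be_def using lpos[of m l] by (intro sum_nonneg) (auto intro: less_imp_le)

lemma al_split: "1 \<le> j \<Longrightarrow> al l (m + j) = al l (m+1) + be m l j"
proof (induction j rule: nat_induct_at_least)
  case base then show ?case by (simp add: be_def)
next
  case (Suc n)
  have "al l (m + Suc n) = al l (m+n) + l (m+n)" using al_Suc[of "m+n" l] Suc by simp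
  then show ?case using Suc be_Suc[of n m l] by simp
qed

lemma total: assumes "dsl_valid m l" shows "al l (m+1) + be m l (m+1) = 1"
proof -
  have "al l (2*m+1) = 1" using assms unfolding dsl_valid_def al_def
    by (simp add: atLeastLessThanSuc_atLeastAtMost)
  moreover have "al l (2*m+1) = al l (m + (m+1))" by (simp add: mult_2)
  ultimately show ?thesis using al_split[of "m+1" l m] by simp
qed

lemma A_eq: "1 \<le> i \<Longrightarrow> dsl_A m l i = {al l i ..< al l (Suc i)}"
  unfolding dsl_A_def dsl_int_def by (simp add: al_def)

lemma B_eq: "1 \<le> j \<Longrightarrow> dsl_B m l j = {al l (m+1) + be m l j ..< al l (m+1) + be m l (Suc j)}"
proof -
  assume j: "1 \<le> j"
  have "dsl_int l (m+j) = {al l (m+j) ..< al l (m+j) + l (m+j)}" by (simp add: dsl_int_def al_def)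
  then show ?thesis unfolding dsl_B_def using al_split[OF j, of l m] be_Suc[OF j, of m l]
    by (simp add: add.assoc)
qed



lemma al_1'[simp]: "al l (Suc 0) = 0" unfolding al_def by simp
lemma be_1'[simp]: "be m l (Suc 0) = 0" unfolding be_def by simp

lemma A_notB: assumes "dsl_valid m l" "1 \<le> i" "i \<le> m" "x \<in> dsl_A m l i" "1 \<le> j" "j \<le> m"
  shows "x \<notin> dsl_B m l j"
proof -
  have "x < al l (Suc i)" using assms A_eq by auto
  also have "\<dots> \<le> al l (m+1)" using al_mono[OF assms(1)] assms by auto
  also have "\<dots> \<le> al l (m+1) + be m l j" using be_nonneg[OF assms(1), of j] assms by auto
  finally show ?thesis using B_eq[OF assms(5)] by auto
qed

lemma A_uniq: assumes "dsl_valid m l" "1 \<le> i" "i \<le> m" "1 \<le> i'" "i' \<le> m"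
  "x \<in> dsl_A m l i" "x \<in> dsl_A m l i'" shows "i = i'"
proof (rule ccontr)
  assume "i \<noteq> i'"
  then consider "i < i'" | "i' < i" by linarith
  then show False
  proof cases
    case 1
    then have "al l (Suc i) \<le> al l i'" using al_mono[OF assms(1), of "Suc i" i'] assms by auto
    then show False using assms A_eq[of i m l] A_eq[of i' m l] by auto
  next
    case 2
    then have "al l (Suc i') \<le> al l i" using al_mono[OF assms(1), of "Suc i'" i] assms by auto
    then show False using assms A_eq[of i m l] A_eq[of i' m l] by auto
  qed
qed

lemma B_uniq: assumes "dsl_valid m l" "1 \<le> i" "i \<le> m" "1 \<le> i'" "i' \<le> m"
  "x \<in> dsl_B m l i" "x \<in> dsl_B m l i'" shows "i = i'"
proof (rule ccontr)
  assume "i \<noteq> i'"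
  then consider "i < i'" | "i' < i" by linarith
  then show False
  proof cases
    case 1
    then have "be m l (Suc i) \<le> be m l i'" using be_mono[OF assms(1), of "Suc i" i'] assms by auto
    then show False using assms B_eq[of i m l] B_eq[of i' m l] by auto
  next
    case 2
    then have "be m l (Suc i') \<le> be m l i" using be_mono[OF assms(1), of "Suc i'" i] assms by auto
    then show False using assms B_eq[of i m l] B_eq[of i' m l] by auto
  qed
qed

lemma T_A: assumes "dsl_valid m l" "1 \<le> i" "i \<le> m" "x \<in> dsl_A m l i"
  shows "dsl_T m l x = x + be m l (Suc i)"
proof -
  have ex: "\<exists>i\<in>{1..m}. x \<in> dsl_A m l i" using assms by auto
  have th: "(THE i'. i'\<in>{1..m} \<and> x \<in> dsl_A m l i') = i"
    by (rule the_equality) (use assms A_uniq[OF assms(1)] in auto)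
  have "(\<Sum>k=1..i. l (m + k)) = be m l (Suc i)" unfolding be_def
    by (simp add: atLeastLessThanSuc_atLeastAtMost)
  then show ?thesis unfolding dsl_T_def using ex th by simp
qed

lemma T_B: assumes "dsl_valid m l" "1 \<le> j" "j \<le> m" "x \<in> dsl_B m l j"
  shows "dsl_T m l x = x - al l (m+1) + al l j"
proof -
  have nex: "\<not> (\<exists>i\<in>{1..m}. x \<in> dsl_A m l i)" using assms A_notB[OF assms(1)] by fastforce
  have ex: "\<exists>i\<in>{1..m}. x \<in> dsl_B m l i" using assms by auto
  have th: "(THE i'. i'\<in>{1..m} \<and> x \<in> dsl_B m l i') = j"
    by (rule the_equality) (use assms B_uniq[OF assms(1)] in auto)
  have "al l (m+1) = (\<Sum>k=1..<j. l k) + (\<Sum>k=j..<m+1. l k)" unfolding al_def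
    using assms by (subst sum.atLeastLessThan_concat) auto
  then have "(\<Sum>k=j..m. l k) = al l (m+1) - al l j" unfolding al_def
    by (simp add: atLeastLessThanSuc_atLeastAtMost)
  then show ?thesis unfolding dsl_T_def using ex nex th by simp
qed

lemma step_cover: fixes f :: "nat \<Rightarrow> real"
  shows "f 1 \<le> x \<Longrightarrow> x < f (Suc n) \<Longrightarrow> \<exists>i\<in>{1..n}. f i \<le> x \<and> x < f (Suc i)"
proof (induction n)
  case 0 then show ?case by simp
next
  case (Suc n)
  show ?case
  proof (cases "x < f (Suc n)")
    case True then show ?thesis using Suc by force
  next
    case False then show ?thesis using Suc by (intro bexI[of _ "Suc n"]) auto
  qed
qed

lemma cls: assumes V: "dsl_valid m l" and x: "0 \<le> x" "x < 1"
  shows "(x \<notin> dsl_Bset m l \<and> (\<exists>i\<in>{1..m}. al l i \<le> x \<and> x < al l (Suc i) \<and>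
            dsl_T m l x = x + be m l (Suc i))) \<or>
         (x \<in> dsl_Bset m l \<and> (\<exists>j\<in>{1..m}. al l (m+1) + be m l j \<le> x \<and>
            x < al l (m+1) + be m l (Suc j) \<and> dsl_T m l x = x - al l (m+1) + al l j))"
proof (cases "x < al l (m+1)")
  case True
  then obtain i where i: "i\<in>{1..m}" "al l i \<le> x" "x < al l (Suc i)"
    using step_cover[of "al l" x m] x by auto
  then have xa: "x \<in> dsl_A m l i" using A_eq[of i m l] by auto
  have "x \<notin> dsl_Bset m l" unfolding dsl_Bset_def using A_notB[OF V _ _ xa] i by auto
  then show ?thesis using i T_A[OF V _ _ xa] by auto
next
  case False
  then obtain j where j: "j\<in>{1..m}" "al l (m+1) + be m l j \<le> x" "x < al l (m+1) + be m l (Suc j)"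
    using step_cover[of "\<lambda>j. al l (m+1) + be m l j" x m] x total[OF V] by auto
  then have xb: "x \<in> dsl_B m l j" using B_eq[of j m l] by auto
  have "x \<in> dsl_Bset m l" unfolding dsl_Bset_def using xb j by auto
  then show ?thesis using j T_B[OF V _ _ xb] by auto
qed

lemma T_range: assumes V: "dsl_valid m l" and x: "0 \<le> x" "x < 1"
  shows "0 \<le> dsl_T m l x \<and> dsl_T m l x < 1"
  using cls[OF V x]
proof (elim disjE conjE bexE)
  fix i assume i: "i \<in> {1..m}" "al l i \<le> x" "x < al l (Suc i)" "dsl_T m l x = x + be m l (Suc i)"
  have "be m l (Suc i) \<le> be m l (m+1)" "al l (Suc i) \<le> al l (m+1)" "0 \<le> be m l (Suc i)"
    using i be_mono[OF V] al_mono[OF V] be_nonneg[OF V] by auto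
  then show ?thesis using i total[OF V] x by auto
next
  fix j assume j: "j \<in> {1..m}" "al l (m+1) + be m l j \<le> x" "x < al l (m+1) + be m l (Suc j)"
    "dsl_T m l x = x - al l (m+1) + al l j"
  have "be m l (Suc j) \<le> be m l (m+1)" "al l j \<le> al l (m+1)" "0 \<le> be m l j" "0 \<le> al l j"
    using j be_mono[OF V] al_mono[OF V] be_nonneg[OF V] al_nonneg[OF V] by auto
  then show ?thesis using j total[OF V] x by auto
qed

lemma T_ord: assumes V: "dsl_valid m l" and xy: "0 \<le> x" "x < y" "y < 1"
  and c: "(x \<in> dsl_Bset m l) = (y \<in> dsl_Bset m l)"
  shows "dsl_T m l y - dsl_T m l x \<ge> y - x"
proof -
  have x1: "x < 1" "0 \<le> y" using xy by auto
  show ?thesis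
  using cls[OF V xy(1) x1(1)] cls[OF V x1(2) xy(3)] c
  proof (elim disjE conjE bexE)
    fix i i' assume i: "i \<in> {1..m}" "al l i \<le> x" "x < al l (Suc i)" "dsl_T m l x = x + be m l (Suc i)"
      and i': "i' \<in> {1..m}" "al l i' \<le> y" "y < al l (Suc i')" "dsl_T m l y = y + be m l (Suc i')"
    have "i \<le> i'"
    proof (rule ccontr)
      assume "\<not> i \<le> i'"
      then have "al l (Suc i') \<le> al l i" using al_mono[OF V, of "Suc i'" i] i by auto
      then show False using i i' xy by auto
    qed
    then have "be m l (Suc i) \<le> be m l (Suc i')" using be_mono[OF V] i' by auto
    then show ?thesis using i i' by auto
  next
    fix i i' assume i: "i \<in> {1..m}" "al l (m+1) + be m l i \<le> x" "x < al l (m+1) + be m l (Suc i)"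
       "dsl_T m l x = x - al l (m+1) + al l i"
      and i': "i' \<in> {1..m}" "al l (m+1) + be m l i' \<le> y" "y < al l (m+1) + be m l (Suc i')"
       "dsl_T m l y = y - al l (m+1) + al l i'"
    have "i \<le> i'"
    proof (rule ccontr)
      assume "\<not> i \<le> i'"
      then have "be m l (Suc i') \<le> be m l i" using be_mono[OF V, of "Suc i'" i] i by auto
      then show False using i i' xy by auto
    qed
    then have "al l i \<le> al l i'" using al_mono[OF V] i' by auto
    then show ?thesis using i i' by auto
  qed auto
qed

lemma T_AB: assumes V: "dsl_valid m l" and xy: "0 \<le> x" "x < y" "y < 1"
  and c: "y \<notin> dsl_Bset m l" shows "x \<notin> dsl_Bset m l"
proof -
  obtain i where i: "i \<in> {1..m}" "y < al l (Suc i)" using cls[OF V, of y] xy c by auto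
  have "al l (Suc i) \<le> al l (m+1)" using al_mono[OF V] i by auto
  then have "x < al l (m+1)" using i xy by auto
  show ?thesis
  proof
    assume xb: "x \<in> dsl_Bset m l"
    then obtain j where j: "j\<in>{1..m}" "al l (m+1) + be m l j \<le> x" using cls[OF V, of x] xy by auto
    then have "be m l j \<ge> 0" using be_nonneg[OF V, of j] by auto
    then show False using \<open>x < al l (m+1)\<close> j by linarith
  qed
qed

lemma T_inj: assumes V: "dsl_valid m l" and x: "0 \<le> x" "x < 1" and y: "0 \<le> y" "y < 1"
  and e: "dsl_T m l x = dsl_T m l y" shows "x = y"
proof -
  have same: "u = v" if "0 \<le> u" "u < 1" "0 \<le> v" "v < 1" "dsl_T m l u = dsl_T m l v"
     "(u \<in> dsl_Bset m l) = (v \<in> dsl_Bset m l)" for u v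
  proof (rule ccontr)
    assume "u \<noteq> v"
    then consider "u < v" | "v < u" by linarith
    then show False
    proof cases
      case 1 then show False using T_ord[OF V, of u v] that by auto
    next
      case 2 then show False using T_ord[OF V, of v u] that by auto
    qed
  qed
  have mixed: "False" if h: "0 \<le> u" "u < 1" "0 \<le> v" "v < 1" "dsl_T m l u = dsl_T m l v"
     "u \<notin> dsl_Bset m l" "v \<in> dsl_Bset m l" for u v
  proof -
    obtain i where i: "i \<in> {1..m}" "al l i \<le> u" "u < al l (Suc i)" "dsl_T m l u = u + be m l (Suc i)"
      using cls[OF V, of u] h by auto
    obtain j where j: "j\<in>{1..m}" "al l (m+1) + be m l j \<le> v" "v < al l (m+1) + be m l (Suc j)"
       "dsl_T m l v = v - al l (m+1) + al l j"
      using cls[OF V, of v] h by auto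
    show False
    proof (cases "j \<le> i")
      case True
      then have "al l j \<le> al l i" "be m l (Suc j) \<le> be m l (Suc i)"
        using al_mono[OF V] be_mono[OF V] i by auto
      then show False using i j h by auto
    next
      case False
      then have "al l (Suc i) \<le> al l j" "be m l (Suc i) \<le> be m l j"
        using al_mono[OF V] be_mono[OF V] j by auto
      then show False using i j h by auto
    qed
  qed
  show ?thesis
    using same[OF x y e] mixed[OF x y e] mixed[OF y x e[symmetric]] by blast
qed

lemma T_Ainc: assumes V: "dsl_valid m l" and x: "0 \<le> x" "x < 1" and c: "x \<notin> dsl_Bset m l"
  shows "dsl_T m l x \<ge> x + l (m+1)"
proof -
  obtain i where i: "i \<in> {1..m}" "dsl_T m l x = x + be m l (Suc i)"
    using cls[OF V x] c by auto
  have "be m l 2 \<le> be m l (Suc i)" using be_mono[OF V] i by auto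
  moreover have "be m l 2 = l (m+1)" using be_Suc[of 1 m l] by (simp add: numeral_2_eq_2)
  ultimately show ?thesis using i by auto
qed

lemma lm1pos: "dsl_valid m l \<Longrightarrow> l (m+1) > 0"
  using lpos[of m l "m+1"] unfolding dsl_valid_def by auto



definition dg :: "nat \<Rightarrow> (nat \<Rightarrow> real) \<Rightarrow> real \<Rightarrow> nat \<Rightarrow> bool" where
  "dg m l x n \<longleftrightarrow> (dsl_T m l ^^ n) x \<in> dsl_Bset m l"

lemma iter_range: assumes V: "dsl_valid m l" and x: "0 \<le> x" "x < 1"
  shows "0 \<le> (dsl_T m l ^^ n) x \<and> (dsl_T m l ^^ n) x < 1"
proof (induction n)
  case 0 then show ?case using x by simp
next
  case (Suc n) then show ?case using T_range[OF V] by simp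
qed

lemma iter_Suc': "(f ^^ Suc n) x = (f ^^ n) (f x)"
  by (simp add: funpow_swap1)

lemma iter_add': "(f ^^ (n + k)) x = (f ^^ n) ((f ^^ k) x)"
  by (simp add: funpow_add)

lemma dg_iter: "dg m l ((dsl_T m l ^^ k) w) n = dg m l w (n + k)"
  unfolding dg_def by (simp add: iter_add')

lemma dg_Suc: "dg m l x (Suc n) = dg m l (dsl_T m l x) n"
  unfolding dg_def by (simp add: funpow_swap1)

lemma dg_0: "dg m l x 0 = (x \<in> dsl_Bset m l)"
  unfolding dg_def by simp

lemma summ: "summable (\<lambda>n. indicator S (g n) / (2::real)^(n+1))"
proof (rule summable_comparison_test'[of "\<lambda>n. (1/2::real)^n" 0])
  show "summable (\<lambda>n. (1/2::real)^n)" by (rule summable_geometric) simp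
  fix n :: nat
  have "indicator S (g n) / (2::real)^(n+1) \<le> 1 / 2^(n+1)"
    by (rule divide_right_mono) (auto simp: indicator_def)
  also have "\<dots> \<le> (1/2)^n"
  proof -
    have "(1::real) / 2^(n+1) = (1/2)^n / 2" by (simp add: power_divide)
    moreover have "(0::real) \<le> (1/2)^n" by simp
    ultimately show ?thesis by linarith
  qed
  finally show "norm (indicator S (g n) / (2::real)^(n+1)) \<le> (1/2)^n"
    by (simp add: indicator_def)
qed

lemma H_eq: "dsl_H m l x = (if x \<in> dsl_Bset m l then 1 else 0) / 2 + dsl_H m l (dsl_T m l x) / 2"
proof -
  define f where "f n = indicator (dsl_Bset m l) ((dsl_T m l ^^ n) x) / (2::real)^(n+1)" for n
  define g where "g n = indicator (dsl_Bset m l) ((dsl_T m l ^^ n) (dsl_T m l x)) / (2::real)^(n+1)" for n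
  have sf: "summable f" unfolding f_def by (rule summ)
  have sg: "summable g" unfolding g_def by (rule summ)
  have fs: "f (Suc n) = (1/2) * g n" for n
    unfolding f_def g_def by (simp add: funpow_swap1)
  have "suminf f = f 0 + (\<Sum>n. f (Suc n))" using suminf_split_head[OF sf] by simp
  also have "(\<Sum>n. f (Suc n)) = (1/2) * suminf g" unfolding fs by (rule suminf_mult[OF sg])
  finally have e: "suminf f = f 0 + (1/2) * suminf g" .
  have h1: "dsl_H m l x = suminf f" unfolding dsl_H_def f_def by simp
  have h2: "dsl_H m l (dsl_T m l x) = suminf g" unfolding dsl_H_def g_def by simp
  have h3: "f 0 = (if x \<in> dsl_Bset m l then 1 else 0) / 2" unfolding f_def by (simp add: indicator_def)
  show ?thesis using e h1 h2 h3 by simp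
qed

lemma H_bounds: "0 \<le> dsl_H m l x \<and> dsl_H m l x \<le> 1"
proof -
  define f where "f n = indicator (dsl_Bset m l) ((dsl_T m l ^^ n) x) / (2::real)^(n+1)" for n
  have sf: "summable f" unfolding f_def by (rule summ)
  have "0 \<le> suminf f" by (rule suminf_nonneg[OF sf]) (simp add: f_def)
  moreover have "suminf f \<le> (\<Sum>n. (1/2::real)^Suc n)"
  proof (rule suminf_le)
    show "f n \<le> (1/2)^Suc n" for n
      unfolding f_def by (simp add: indicator_def power_divide)
    show "summable f" by (rule sf)
    show "summable (\<lambda>n. (1/2::real)^Suc n)" using power_half_series by (rule sums_summable)
  qed
  moreover have "(\<Sum>n. (1/2::real)^Suc n) = 1" using power_half_series by (rule sums_unique[symmetric])
  ultimately show ?thesis unfolding dsl_H_def f_def by simp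
qed

lemma H_congr: "(\<forall>n. dg m l x n = dg m l y n) \<Longrightarrow> dsl_H m l x = dsl_H m l y"
  unfolding dsl_H_def dg_def by (simp add: indicator_def)

lemma H_lower: "dg m l x N \<Longrightarrow> dsl_H m l x \<ge> 1 / 2^(N+1)"
proof (induction N arbitrary: x)
  case 0
  then show ?case using H_eq[of m l x] H_bounds[of m l "dsl_T m l x"] by (simp add: dg_0)
next
  case (Suc N)
  then have "dsl_H m l (dsl_T m l x) \<ge> 1 / 2^(N+1)" by (simp add: dg_Suc)
  moreover have "dsl_H m l x \<ge> dsl_H m l (dsl_T m l x) / 2" using H_eq[of m l x] by simp
  ultimately show ?case by simp
qed

lemma FD: "(\<forall>k<j. dg m l x k = dg m l y k) \<Longrightarrow> \<not> dg m l x j \<Longrightarrow> dg m l y j \<Longrightarrow> j < N \<Longrightarrow>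
   dg m l y N \<Longrightarrow> dsl_H m l y - dsl_H m l x \<ge> 1 / 2^(N+1)"
proof (induction j arbitrary: x y N)
  case 0
  obtain N' where N: "N = Suc N'" using 0 by (cases N) auto
  have a1: "dsl_H m l (dsl_T m l y) \<ge> 1 / 2^(N'+1)" using H_lower 0 N by (simp add: dg_Suc)
  have a2: "dsl_H m l y = 1/2 + dsl_H m l (dsl_T m l y) / 2" using H_eq[of m l y] 0 by (simp add: dg_0)
  have a3: "dsl_H m l x = dsl_H m l (dsl_T m l x) / 2" using H_eq[of m l x] 0 by (simp add: dg_0)
  have a4: "dsl_H m l (dsl_T m l x) \<le> 1" using H_bounds by blast
  have "dsl_H m l y - dsl_H m l x \<ge> dsl_H m l (dsl_T m l y) / 2" using a2 a3 a4 by linarith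
  moreover have "dsl_H m l (dsl_T m l y) / 2 \<ge> (1 / 2^(N'+1)) / 2" using a1 by (rule divide_right_mono) simp
  ultimately have "dsl_H m l y - dsl_H m l x \<ge> (1 / 2^(N'+1)) / 2" by linarith
  moreover have "(1::real) / 2^(N+1) = (1 / 2^(N'+1)) / 2" using N by simp
  ultimately show ?case by simp
next
  case (Suc j)
  obtain N' where N: "N = Suc N'" using Suc by (cases N) auto
  have e0: "(x \<in> dsl_Bset m l) = (y \<in> dsl_Bset m l)" using Suc.prems(1) by (auto simp: dg_0)
  have X: "dsl_H m l (dsl_T m l y) - dsl_H m l (dsl_T m l x) \<ge> 1 / 2^(N'+1)"
  proof -
    have "\<forall>k<j. dg m l (dsl_T m l x) k = dg m l (dsl_T m l y) k"
    proof (intro allI impI)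
      fix k assume "k < j"
      then have "Suc k < Suc j" by simp
      then have "dg m l x (Suc k) = dg m l y (Suc k)" using Suc.prems(1) by blast
      then show "dg m l (dsl_T m l x) k = dg m l (dsl_T m l y) k" by (simp add: dg_Suc)
    qed
    moreover have "\<not> dg m l (dsl_T m l x) j" "dg m l (dsl_T m l y) j" "j < N'" "dg m l (dsl_T m l y) N'"
      using Suc.prems N by (auto simp: dg_Suc)
    ultimately show ?thesis using Suc.IH[of "dsl_T m l x" "dsl_T m l y" N'] by blast
  qed
  have Y: "dsl_H m l y - dsl_H m l x = (dsl_H m l (dsl_T m l y) - dsl_H m l (dsl_T m l x)) / 2"
    using H_eq[of m l y] H_eq[of m l x] e0 by (simp add: field_simps)
  have "(dsl_H m l (dsl_T m l y) - dsl_H m l (dsl_T m l x)) / 2 \<ge> (1 / 2^(N'+1)) / 2"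
    using X by (rule divide_right_mono) simp
  then have "dsl_H m l y - dsl_H m l x \<ge> (1 / 2^(N'+1)) / 2" unfolding Y .
  moreover have "(1::real) / 2^(N+1) = (1 / 2^(N'+1)) / 2" using N by simp
  ultimately show ?case by simp
qed

lemma NEA: assumes V: "dsl_valid m l" and x: "0 \<le> x" "x < 1"
  shows "\<exists>N>M. dg m l x N"
proof (rule ccontr)
  assume "\<not> (\<exists>N>M. dg m l x N)"
  then have nb: "\<And>N. N > M \<Longrightarrow> \<not> dg m l x N" by blast
  define x0 where "x0 = (dsl_T m l ^^ Suc M) x"
  define d where "d = l (m+1)"
  have d: "d > 0" unfolding d_def using lm1pos[OF V] .
  have x0: "0 \<le> x0" unfolding x0_def using iter_range[OF V x] by blast
  have it: "(dsl_T m l ^^ k) x0 = (dsl_T m l ^^ (k + Suc M)) x" for k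
    unfolding x0_def by (simp add: iter_add' funpow_swap1)
  have grow: "(dsl_T m l ^^ k) x0 \<ge> x0 + k * d" for k
  proof (induction k)
    case 0 then show ?case by simp
  next
    case (Suc k)
    have r: "0 \<le> (dsl_T m l ^^ k) x0" "(dsl_T m l ^^ k) x0 < 1"
      unfolding it using iter_range[OF V x, of "k + Suc M"] by blast+
    have "(dsl_T m l ^^ k) x0 \<notin> dsl_Bset m l" using nb[of "k + Suc M"] unfolding it dg_def by auto
    then have "dsl_T m l ((dsl_T m l ^^ k) x0) \<ge> (dsl_T m l ^^ k) x0 + d"
      using T_Ainc[OF V r] d_def by auto
    then show ?case using Suc by (simp add: algebra_simps)
  qed
  obtain k :: nat where k: "1 < k * d" using ex_less_of_nat_mult[OF d] by auto
  have "(dsl_T m l ^^ k) x0 < 1" unfolding it by (rule conjunct2[OF iter_range[OF V x]])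
  moreover have "1 < (dsl_T m l ^^ k) x0"
    using add_strict_increasing2[OF x0 k] grow[of k] by (rule less_le_trans)
  ultimately show False by (meson less_asym)
qed

lemma ordn: assumes V: "dsl_valid m l" and xy: "0 \<le> x" "x < y" "y < 1"
  shows "(\<forall>k<n. dg m l x k = dg m l y k) \<Longrightarrow> (dsl_T m l ^^ n) y - (dsl_T m l ^^ n) x \<ge> y - x"
proof (induction n)
  case 0 then show ?case by simp
next
  case (Suc n)
  define X where "X = (dsl_T m l ^^ n) x"
  define Y where "Y = (dsl_T m l ^^ n) y"
  have h: "Y - X \<ge> y - x" using Suc unfolding X_def Y_def by auto
  have x1: "x < 1" "0 \<le> y" using xy by linarith+
  have r: "0 \<le> X" "Y < 1" unfolding X_def Y_def
    using iter_range[OF V xy(1) x1(1), of n] iter_range[OF V x1(2) xy(3), of n] by blast+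
  have c: "(X \<in> dsl_Bset m l) = (Y \<in> dsl_Bset m l)" using Suc.prems unfolding X_def Y_def dg_def by auto
  have "dsl_T m l Y - dsl_T m l X \<ge> Y - X" using T_ord[OF V r(1) _ r(2) c] h xy by auto
  then show ?case using h unfolding X_def Y_def by simp
qed

lemma first_diff: assumes V: "dsl_valid m l" and xy: "0 \<le> x" "x < y" "y < 1"
  and nd: "\<not> (\<forall>n. dg m l x n = dg m l y n)"
  shows "\<exists>j. (\<forall>k<j. dg m l x k = dg m l y k) \<and> \<not> dg m l x j \<and> dg m l y j"
proof -
  define j where "j = (LEAST n. dg m l x n \<noteq> dg m l y n)"
  obtain n0 where n0: "dg m l x n0 \<noteq> dg m l y n0" using nd by blast
  have jd: "dg m l x j \<noteq> dg m l y j" unfolding j_def using n0 by (rule LeastI)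
  have pre: "\<forall>k<j. dg m l x k = dg m l y k" unfolding j_def using not_less_Least by blast
  define X where "X = (dsl_T m l ^^ j) x"
  define Y where "Y = (dsl_T m l ^^ j) y"
  have "Y - X \<ge> y - x" using ordn[OF V xy pre] unfolding X_def Y_def .
  then have XY: "X < Y" using xy by auto
  have x1: "x < 1" "0 \<le> y" using xy by linarith+
  have r: "0 \<le> X" "Y < 1" unfolding X_def Y_def
    using iter_range[OF V xy(1) x1(1), of j] iter_range[OF V x1(2) xy(3), of j] by blast+
  have "dg m l y j"
  proof (rule ccontr)
    assume "\<not> dg m l y j"
    then have "Y \<notin> dsl_Bset m l" unfolding Y_def dg_def .
    then have "X \<notin> dsl_Bset m l" using T_AB[OF V r(1) XY r(2)] by blast
    then show False using jd \<open>\<not> dg m l y j\<close> unfolding X_def dg_def by simp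
  qed
  then show ?thesis using pre jd by auto
qed

lemma H_strict: assumes V: "dsl_valid m l" and xy: "0 \<le> x" "x < y" "y < 1"
  and nd: "\<not> (\<forall>n. dg m l x n = dg m l y n)"
  shows "dsl_H m l x < dsl_H m l y"
proof -
  obtain j where j: "\<forall>k<j. dg m l x k = dg m l y k" "\<not> dg m l x j" "dg m l y j"
    using first_diff[OF V xy nd] by blast
  obtain N where N: "N > j" "dg m l y N" using NEA[OF V, of y j] xy by auto
  have "dsl_H m l y - dsl_H m l x \<ge> 1 / 2^(N+1)" using FD[OF j N] .
  moreover have "(0::real) < 1 / 2^(N+1)" by simp
  ultimately show ?thesis by linarith
qed

lemma H_mono: assumes V: "dsl_valid m l" and xy: "0 \<le> x" "x \<le> y" "y < 1"
  shows "dsl_H m l x \<le> dsl_H m l y"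
proof (cases "x = y \<or> (\<forall>n. dg m l x n = dg m l y n)")
  case True then show ?thesis using H_congr[of m l x y] by auto
next
  case False then show ?thesis using H_strict[OF V, of x y] xy by auto
qed

lemma H_eq_agree: assumes V: "dsl_valid m l" and xy: "0 \<le> x" "x < y" "y < 1"
  and e: "dsl_H m l x = dsl_H m l y" shows "\<forall>n. dg m l x n = dg m l y n"
  using H_strict[OF V xy] e by auto

lemma close_agree: assumes V: "dsl_valid m l" and z: "0 \<le> z" "z < 1"
  shows "\<exists>e>0. \<forall>y. 0 \<le> y \<and> y < z \<and> dsl_H m l z - dsl_H m l y < e \<longrightarrow> (\<forall>k<J. dg m l y k = dg m l z k)"
proof -
  obtain N where N: "N > J" "dg m l z N" using NEA[OF V z, of J] by auto
  have "\<forall>k<J. dg m l y k = dg m l z k" if y: "0 \<le> y" "y < z" "dsl_H m l z - dsl_H m l y < 1 / 2^(N+1)" for y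
  proof (rule ccontr)
    assume "\<not> (\<forall>k<J. dg m l y k = dg m l z k)"
    then obtain k where k: "k < J" "dg m l y k \<noteq> dg m l z k" by auto
    then have nd: "\<not> (\<forall>n. dg m l y n = dg m l z n)" by auto
    obtain j where j: "\<forall>k<j. dg m l y k = dg m l z k" "\<not> dg m l y j" "dg m l z j"
      using first_diff[OF V y(1) y(2) z(2) nd] by blast
    have "j \<le> k" using j(1) k(2) by (meson not_le)
    then have "j < N" using k N by linarith
    then have "dsl_H m l z - dsl_H m l y \<ge> 1 / 2^(N+1)" using FD[OF j _ N(2)] by blast
    then show False using y by linarith
  qed
  moreover have "(0::real) < 1 / 2^(N+1)" by simp
  ultimately show ?thesis by blast
qed



lemma mid_dg: assumes V: "dsl_valid m l" and h: "0 \<le> X" "X < W" "W < Y" "Y < 1"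
  and c: "(X \<in> dsl_Bset m l) = (Y \<in> dsl_Bset m l)"
  shows "(W \<in> dsl_Bset m l) = (X \<in> dsl_Bset m l)"
proof (cases "Y \<in> dsl_Bset m l")
  case True
  then have xb: "X \<in> dsl_Bset m l" using c by simp
  have w0: "0 \<le> W" "W < 1" using h by linarith+
  have "W \<in> dsl_Bset m l"
  proof (rule ccontr)
    assume "W \<notin> dsl_Bset m l"
    then have "X \<notin> dsl_Bset m l" using T_AB[OF V h(1) h(2) w0(2)] by blast
    then show False using xb by simp
  qed
  then show ?thesis using xb by simp
next
  case False
  have w0: "0 \<le> W" using h by linarith
  have "W \<notin> dsl_Bset m l" using T_AB[OF V w0 h(3) h(4) False] .
  then show ?thesis using False c by simp
qed

lemma sandwich: assumes V: "dsl_valid m l" and h: "0 \<le> x" "x < v" "v < y" "y < 1"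
  and a: "\<forall>n. dg m l x n = dg m l y n"
  shows "\<forall>n. dg m l v n = dg m l x n"
proof -
  have r: "x < 1" "0 \<le> v" "v < 1" "0 \<le> y" using h by linarith+
  have main: "(dsl_T m l ^^ n) x < (dsl_T m l ^^ n) v \<and> (dsl_T m l ^^ n) v < (dsl_T m l ^^ n) y" for n
  proof (induction n)
    case 0 then show ?case using h by simp
  next
    case (Suc n)
    define X where "X = (dsl_T m l ^^ n) x"
    define W where "W = (dsl_T m l ^^ n) v"
    define Y where "Y = (dsl_T m l ^^ n) y"
    have o: "X < W" "W < Y" using Suc unfolding X_def W_def Y_def by auto
    have rX: "0 \<le> X" unfolding X_def using iter_range[OF V h(1) r(1), of n] by blast
    have rY: "Y < 1" unfolding Y_def using iter_range[OF V r(4) h(4), of n] by blast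
    have c: "(X \<in> dsl_Bset m l) = (Y \<in> dsl_Bset m l)" using a unfolding X_def Y_def dg_def by blast
    have cw: "(W \<in> dsl_Bset m l) = (X \<in> dsl_Bset m l)" using mid_dg[OF V rX o rY c] .
    have "dsl_T m l W - dsl_T m l X \<ge> W - X" using T_ord[OF V rX o(1)] o rY cw by auto
    moreover have "dsl_T m l Y - dsl_T m l W \<ge> Y - W" using T_ord[OF V _ o(2) rY] o rX cw c by auto
    ultimately show ?case using o unfolding X_def W_def Y_def by simp
  qed
  show ?thesis
  proof
    fix n
    have rX: "0 \<le> (dsl_T m l ^^ n) x" using iter_range[OF V h(1) r(1), of n] by blast
    have rY: "(dsl_T m l ^^ n) y < 1" using iter_range[OF V r(4) h(4), of n] by blast
    have c: "((dsl_T m l ^^ n) x \<in> dsl_Bset m l) = ((dsl_T m l ^^ n) y \<in> dsl_Bset m l)"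
      using a unfolding dg_def by blast
    show "dg m l v n = dg m l x n" unfolding dg_def
      using mid_dg[OF V rX conjunct1[OF main] conjunct2[OF main] rY c] .
  qed
qed

lemma iter_inj: assumes V: "dsl_valid m l"
  shows "0 \<le> x \<Longrightarrow> x < 1 \<Longrightarrow> 0 \<le> y \<Longrightarrow> y < 1 \<Longrightarrow> (dsl_T m l ^^ n) x = (dsl_T m l ^^ n) y \<Longrightarrow> x = y"
proof (induction n arbitrary: x y)
  case 0 then show ?case by simp
next
  case (Suc n)
  have tx: "0 \<le> dsl_T m l x" "dsl_T m l x < 1" using T_range[OF V Suc.prems(1,2)] by auto
  have ty: "0 \<le> dsl_T m l y" "dsl_T m l y < 1" using T_range[OF V Suc.prems(3,4)] by auto
  have "(dsl_T m l ^^ n) (dsl_T m l x) = (dsl_T m l ^^ n) (dsl_T m l y)"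
    using Suc.prems(5) by (simp only: iter_Suc')
  then have "dsl_T m l x = dsl_T m l y" using Suc.IH[OF tx ty] by blast
  then show ?case using T_inj[OF V Suc.prems(1-4)] by blast
qed

lemma PER: assumes V: "dsl_valid m l" and v: "0 \<le> v" "v < 1" and p: "1 \<le> p"
  and a: "\<forall>n. dg m l ((dsl_T m l ^^ p) v) n = dg m l v n"
  shows "(dsl_T m l ^^ p) v = v"
proof -
  define g where "g j = (dsl_T m l ^^ (j*p)) v" for j
  have gS: "g (Suc j) = (dsl_T m l ^^ p) (g j)" for j
    unfolding g_def by (simp add: iter_add'[symmetric] add.commute)
  have g0: "g 0 = v" unfolding g_def by simp
  have g1: "g 1 = (dsl_T m l ^^ p) v" unfolding g_def by simp
  have gr: "0 \<le> g j \<and> g j < 1" for j unfolding g_def using iter_range[OF V v] by blast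
  have vper: "dg m l v (n + p) = dg m l v n" for n using a dg_iter[of m l p v n] by simp
  have vperk: "dg m l v (n + j*p) = dg m l v n" for n j
  proof (induction j)
    case 0 then show ?case by simp
  next
    case (Suc j)
    have e: "n + Suc j * p = (n + j*p) + p" by simp
    have "dg m l v (n + Suc j * p) = dg m l v ((n + j*p) + p)" by (simp only: e)
    also have "\<dots> = dg m l v (n + j*p)" by (rule vper)
    also have "\<dots> = dg m l v n" by (rule Suc)
    finally show ?case .
  qed
  have gdg: "dg m l (g j) n = dg m l v n" for j n
    unfolding g_def dg_iter using vperk by simp
  show ?thesis
  proof (rule ccontr)
    assume ne: "(dsl_T m l ^^ p) v \<noteq> v"
    then consider "v < (dsl_T m l ^^ p) v" | "(dsl_T m l ^^ p) v < v" by linarith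
    then show False
    proof cases
      case 1
      define t where "t = g 1 - g 0"
      have t: "t > 0" unfolding t_def g0 g1 using 1 by simp
      have inc: "g (Suc j) - g j \<ge> t" for j
      proof (induction j)
        case 0 then show ?case unfolding t_def by simp
      next
        case (Suc j)
        have lt: "g j < g (Suc j)" using Suc t by linarith
        have "(dsl_T m l ^^ p) (g (Suc j)) - (dsl_T m l ^^ p) (g j) \<ge> g (Suc j) - g j"
          using ordn[OF V conjunct1[OF gr[of j]] lt conjunct2[OF gr[of "Suc j"]], of p] gdg by simp
        then show ?case using Suc unfolding gS[symmetric] by linarith
      qed
      have lin: "g j \<ge> v + j * t" for j
      proof (induction j)
        case 0 then show ?case using g0 by simp
      next
        case (Suc j) then show ?case using inc[of j] by (simp add: algebra_simps)
      qed
      obtain k :: nat where k: "1 < k * t" using ex_less_of_nat_mult[OF t] by auto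
      have "1 < g k" using add_strict_increasing2[OF v(1) k] lin[of k] by (rule less_le_trans)
      then show False using gr[of k] by (meson less_asym)
    next
      case 2
      define t where "t = g 0 - g 1"
      have t: "t > 0" unfolding t_def g0 g1 using 2 by simp
      have dec: "g j - g (Suc j) \<ge> t" for j
      proof (induction j)
        case 0 then show ?case unfolding t_def by simp
      next
        case (Suc j)
        have lt: "g (Suc j) < g j" using Suc t by linarith
        have "(dsl_T m l ^^ p) (g j) - (dsl_T m l ^^ p) (g (Suc j)) \<ge> g j - g (Suc j)"
          using ordn[OF V conjunct1[OF gr[of "Suc j"]] lt conjunct2[OF gr[of j]], of p] gdg by simp
        then show ?case using Suc unfolding gS[symmetric] by linarith
      qed
      have lin: "g j \<le> v - j * t" for j
      proof (induction j)
        case 0 then show ?case using g0 by simp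
      next
        case (Suc j) then show ?case using dec[of j] by (simp add: algebra_simps)
      qed
      obtain k :: nat where k: "1 < k * t" using ex_less_of_nat_mult[OF t] by auto
      have "g k < 0" using lin[of k] k v(2) by linarith
      then show False using gr[of k] by linarith
    qed
  qed
qed



lemma floor_close: fixes a b d :: real
  assumes d: "d > 0" and ab: "0 \<le> a" "0 \<le> b" and e: "nat \<lfloor>a/d\<rfloor> = nat \<lfloor>b/d\<rfloor>"
  shows "a < b + d"
proof -
  have "0 \<le> a/d" "0 \<le> b/d" using ab d by auto
  then have fl: "0 \<le> \<lfloor>a/d\<rfloor>" "0 \<le> \<lfloor>b/d\<rfloor>" by auto
  have fe: "\<lfloor>a/d\<rfloor> = \<lfloor>b/d\<rfloor>" using e eq_nat_nat_iff[OF fl] by simp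
  have "a/d < of_int \<lfloor>a/d\<rfloor> + 1" by linarith
  also have "\<dots> = of_int \<lfloor>b/d\<rfloor> + 1" using fe by simp
  also have "\<dots> \<le> b/d + 1" by linarith
  finally have "a/d < b/d + 1" .
  then have "a/d < (b + d)/d" using d by (simp add: add_divide_distrib)
  then show ?thesis using d by (simp add: divide_less_cancel)
qed

lemma period: assumes V: "dsl_valid m l" and zw: "0 \<le> z" "z < w" "w < 1"
  and a: "\<forall>n. dg m l z n = dg m l w n"
  shows "\<exists>p\<ge>1. (dsl_T m l ^^ p) z = z"
proof -
  have z1: "z < 1" "0 \<le> w" using zw by linarith+
  define d where "d = w - z"
  have d: "d > 0" unfolding d_def using zw by simp
  have gap: "(dsl_T m l ^^ n) w - (dsl_T m l ^^ n) z \<ge> d" for n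
    unfolding d_def using ordn[OF V zw, of n] a by auto
  have rz: "0 \<le> (dsl_T m l ^^ n) z \<and> (dsl_T m l ^^ n) z < 1" for n using iter_range[OF V zw(1) z1(1)] .
  have rw: "0 \<le> (dsl_T m l ^^ n) w \<and> (dsl_T m l ^^ n) w < 1" for n using iter_range[OF V z1(2) zw(3)] .
  define D where "D = nat \<lfloor>1/d\<rfloor>"
  define f where "f n = nat \<lfloor>(dsl_T m l ^^ n) z / d\<rfloor>" for n
  have sub: "f ` {0..D+1} \<subseteq> {0..D}"
  proof
    fix y assume "y \<in> f ` {0..D+1}"
    then obtain n where y: "y = f n" by auto
    have "(dsl_T m l ^^ n) z / d \<le> 1 / d" using rz[of n] d by (intro divide_right_mono) auto
    then have "\<lfloor>(dsl_T m l ^^ n) z / d\<rfloor> \<le> \<lfloor>1/d\<rfloor>" by (rule floor_mono)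
    then show "y \<in> {0..D}" unfolding y f_def D_def by (simp add: nat_mono)
  qed
  have "card (f ` {0..D+1}) \<le> card {0..D}" by (rule card_mono[OF _ sub]) simp
  then have "card (f ` {0..D+1}) < card {0..D+1}" by simp
  then have "\<not> inj_on f {0..D+1}" by (rule pigeonhole)
  then obtain n1 n2 where nn: "n1 \<noteq> n2" "f n1 = f n2" unfolding inj_on_def by blast
  obtain n1 n2 where nn: "n1 < n2" "f n1 = f n2"
    using nn by (metis linorder_neqE_nat)
  define x1 where "x1 = (dsl_T m l ^^ n1) z"
  define x2 where "x2 = (dsl_T m l ^^ n2) z"
  have x1r: "0 \<le> x1" "x1 < 1" unfolding x1_def using rz by auto
  have x2r: "0 \<le> x2" "x2 < 1" unfolding x2_def using rz by auto
  have c12: "x1 < x2 + d" using floor_close[OF d x1r(1) x2r(1)] nn(2) unfolding f_def x1_def x2_def by simp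
  have c21: "x2 < x1 + d" using floor_close[OF d x2r(1) x1r(1)] nn(2) unfolding f_def x1_def x2_def by simp
  have dgs: "dg m l ((dsl_T m l ^^ k) z) n = dg m l ((dsl_T m l ^^ k) w) n" for k n
    using a by (simp add: dg_iter)
  have agr: "\<forall>n. dg m l ((dsl_T m l ^^ (n2 - n1)) x1) n = dg m l x1 n"
  proof -
    have e: "(dsl_T m l ^^ (n2 - n1)) x1 = x2" unfolding x1_def x2_def
      using nn(1) by (simp add: iter_add'[symmetric])
    consider "x1 = x2" | "x1 < x2" | "x2 < x1" by linarith
    then show ?thesis
    proof cases
      case 1 then show ?thesis using e by simp
    next
      case 2
      have "x2 < (dsl_T m l ^^ n1) w" using c21 gap[of n1] unfolding x1_def by linarith
      then have "\<forall>n. dg m l x2 n = dg m l x1 n"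
        using sandwich[OF V x1r(1) 2 _ conjunct2[OF rw[of n1]]] dgs[of n1] unfolding x1_def by blast
      then show ?thesis using e by simp
    next
      case 3
      have "x1 < (dsl_T m l ^^ n2) w" using c12 gap[of n2] unfolding x2_def by linarith
      then have "\<forall>n. dg m l x1 n = dg m l x2 n"
        using sandwich[OF V x2r(1) 3 _ conjunct2[OF rw[of n2]]] dgs[of n2] unfolding x2_def by blast
      then show ?thesis using e by simp
    qed
  qed
  have p1: "1 \<le> n2 - n1" using nn by simp
  have "(dsl_T m l ^^ (n2 - n1)) x1 = x1" using PER[OF V x1r p1 agr] .
  then have "(dsl_T m l ^^ n1) ((dsl_T m l ^^ (n2 - n1)) z) = (dsl_T m l ^^ n1) z"
    unfolding x1_def by (simp add: iter_add'[symmetric] add.commute)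
  then have "(dsl_T m l ^^ (n2 - n1)) z = z"
    using iter_inj[OF V conjunct1[OF rz] conjunct2[OF rz] zw(1) z1(1)] by blast
  then show ?thesis using p1 by blast
qed



lemma core: assumes V: "dsl_valid m l" and a: "0 \<le> a" "a < 1" and w: "w < 1"
  and zw: "dsl_T m l a < w" and Hzw: "dsl_H m l (dsl_T m l a) = dsl_H m l w"
  and dl: "dl > 0"
  and jump: "\<And>u. 0 \<le> u \<Longrightarrow> u < a \<Longrightarrow> (u \<in> dsl_Bset m l) = (a \<in> dsl_Bset m l) \<Longrightarrow>
              dsl_T m l a - dsl_T m l u \<ge> a - u + dl"
  and approx: "\<And>e. e > 0 \<Longrightarrow> \<exists>y. 0 \<le> y \<and> y < dsl_T m l a \<and> dsl_H m l (dsl_T m l a) - dsl_H m l y < e"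
  shows False
proof -
  define z where "z = dsl_T m l a"
  have zr: "0 \<le> z" "z < 1" unfolding z_def using T_range[OF V a] by auto
  have zw': "z < w" using zw unfolding z_def .
  have agr: "\<forall>n. dg m l z n = dg m l w n"
    using H_eq_agree[OF V zr(1) zw' w] Hzw unfolding z_def by blast
  obtain p where p: "p \<ge> 1" "(dsl_T m l ^^ p) z = z" using period[OF V zr(1) zw' w agr] by blast
  have pS: "p = Suc (p - 1)" using p by simp
  have pa: "(dsl_T m l ^^ (p - 1)) z = a"
  proof -
    have "dsl_T m l ((dsl_T m l ^^ (p - 1)) z) = (dsl_T m l ^^ p) z"
      by (subst (2) pS) simp
    also have "\<dots> = dsl_T m l a" using p(2) unfolding z_def by simp
    finally show ?thesis using T_inj[OF V _ _ a] iter_range[OF V zr, of "p - 1"] by blast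
  qed
  have zper: "dg m l z (n + p) = dg m l z n" for n
    using dg_iter[of m l p z n] p(2) by simp
  have dga: "dg m l z (p - 1) = (a \<in> dsl_Bset m l)" unfolding dg_def using pa by simp
  have key: "z - (dsl_T m l ^^ p) u \<ge> z - u + dl"
    if u: "0 \<le> u" "u < z" and ag: "\<forall>i<p. dg m l u i = dg m l z i" for u
  proof -
    define U where "U = (dsl_T m l ^^ (p - 1)) u"
    have "(dsl_T m l ^^ (p - 1)) z - U \<ge> z - u"
      unfolding U_def using ordn[OF V u zr(2), of "p - 1"] ag by auto
    then have aU: "a - U \<ge> z - u" using pa by simp
    have u1: "u < 1" using u zr by linarith
    have Ur: "0 \<le> U" unfolding U_def using iter_range[OF V u(1) u1, of "p - 1"] by blast
    have Ua: "U < a" using aU u by linarith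
    have "dg m l u (p - 1) = dg m l z (p - 1)" using ag p by auto
    then have cU: "(U \<in> dsl_Bset m l) = (a \<in> dsl_Bset m l)" using dga unfolding U_def dg_def by simp
    have j: "dsl_T m l a - dsl_T m l U \<ge> a - U + dl" using jump[OF Ur Ua cU] .
    have "dsl_T m l U = (dsl_T m l ^^ p) u" unfolding U_def by (subst (2) pS) simp
    then show ?thesis using j aU unfolding z_def by linarith
  qed
  have iter: "z - (dsl_T m l ^^ (k*p)) u \<ge> z - u + k*dl"
    if "0 \<le> u" "u < z" "\<forall>i<k*p. dg m l u i = dg m l z i" for k u
    using that
  proof (induction k arbitrary: u)
    case 0 then show ?case by simp
  next
    case (Suc k)
    have agp: "\<forall>i<p. dg m l u i = dg m l z i" using Suc.prems(3) by auto
    define u' where "u' = (dsl_T m l ^^ p) u"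
    have k1: "z - u' \<ge> z - u + dl" unfolding u'_def using key[OF Suc.prems(1,2) agp] .
    have u'z: "u' < z" using k1 Suc.prems dl by linarith
    have u'r: "0 \<le> u'" unfolding u'_def using iter_range[OF V Suc.prems(1), of p] Suc.prems(2) zr by auto
    have agk: "\<forall>i<k*p. dg m l u' i = dg m l z i"
    proof (intro allI impI)
      fix i assume i: "i < k*p"
      have "dg m l u' i = dg m l u (i + p)" unfolding u'_def by (rule dg_iter)
      also have "\<dots> = dg m l z (i + p)" using Suc.prems(3) i by simp
      also have "\<dots> = dg m l z i" by (rule zper)
      finally show "dg m l u' i = dg m l z i" .
    qed
    have ih: "z - (dsl_T m l ^^ (k*p)) u' \<ge> z - u' + k*dl" using Suc.IH[OF u'r u'z agk] .
    have "(dsl_T m l ^^ (Suc k * p)) u = (dsl_T m l ^^ (k*p)) u'"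
      unfolding u'_def by (simp add: iter_add'[symmetric] add.commute)
    then show ?case using ih k1 by (simp add: algebra_simps)
  qed
  obtain k :: nat where k: "1 < k * dl" using ex_less_of_nat_mult[OF dl] by auto
  obtain e where e: "e > 0" and ee: "\<forall>y. 0 \<le> y \<and> y < z \<and> dsl_H m l z - dsl_H m l y < e \<longrightarrow>
        (\<forall>i<k*p. dg m l y i = dg m l z i)"
    using close_agree[OF V zr, of "k*p"] by blast
  obtain y where y: "0 \<le> y" "y < z" "dsl_H m l z - dsl_H m l y < e" using approx[OF e] unfolding z_def by blast
  have "z - (dsl_T m l ^^ (k*p)) y \<ge> z - y + k*dl" using iter[OF y(1,2)] ee y by blast
  moreover have "0 \<le> (dsl_T m l ^^ (k*p)) y" using iter_range[OF V y(1), of "k*p"] y zr by auto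
  ultimately show False using y(2) zr(2) k by linarith
qed



lemma J_sing: "dsl_H m l ` C = {p} \<Longrightarrow> dsl_J m l C = {p}"
  unfolding dsl_J_def by simp

lemma J_upper: "(\<And>x. x \<in> C \<Longrightarrow> dsl_H m l x \<le> r) \<Longrightarrow> dsl_J m l C \<subseteq> {..r}"
  unfolding dsl_J_def
  by (rule closure_minimal[OF hull_minimal]) auto

lemma J_lower: "(\<And>x. x \<in> C \<Longrightarrow> r \<le> dsl_H m l x) \<Longrightarrow> dsl_J m l C \<subseteq> {r..}"
  unfolding dsl_J_def
  by (rule closure_minimal[OF hull_minimal]) auto

lemma A_range: assumes V: "dsl_valid m l" "1 \<le> i" "i \<le> m" "x \<in> dsl_A m l i"
  shows "0 \<le> x \<and> x < 1"
proof -
  have "0 \<le> al l i" "al l (Suc i) \<le> al l (m+1)" "0 \<le> be m l (m+1)"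
    using al_nonneg[OF V(1)] al_mono[OF V(1)] be_nonneg[OF V(1)] V by auto
  then show ?thesis using V A_eq[of i m l] total[OF V(1)] by auto
qed

lemma B_range: assumes V: "dsl_valid m l" "1 \<le> j" "j \<le> m" "x \<in> dsl_B m l j"
  shows "0 \<le> x \<and> x < 1"
proof -
  have "0 \<le> al l (m+1)" "0 \<le> be m l j" "be m l (Suc j) \<le> be m l (m+1)"
    using al_nonneg[OF V(1)] be_mono[OF V(1)] be_nonneg[OF V(1)] V by auto
  then show ?thesis using V B_eq[of j m l] total[OF V(1)] by auto
qed

lemma A_notBset: assumes V: "dsl_valid m l" "1 \<le> i" "i \<le> m" "x \<in> dsl_A m l i"
  shows "x \<notin> dsl_Bset m l"
  unfolding dsl_Bset_def using A_notB[OF V] by auto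

lemma B_Bset: "1 \<le> j \<Longrightarrow> j \<le> m \<Longrightarrow> x \<in> dsl_B m l j \<Longrightarrow> x \<in> dsl_Bset m l"
  unfolding dsl_Bset_def by auto

lemma HA: assumes V: "dsl_valid m l" "1 \<le> i" "i \<le> m" "x \<in> dsl_A m l i"
  shows "dsl_H m l x = dsl_H m l (dsl_T m l x) / 2"
  using H_eq[of m l x] A_notBset[OF V] by simp

lemma HB: assumes "1 \<le> j" "j \<le> m" "x \<in> dsl_B m l j"
  shows "dsl_H m l x = 1/2 + dsl_H m l (dsl_T m l x) / 2"
  using H_eq[of m l x] B_Bset[OF assms] by simp

lemma part1: assumes V: "dsl_valid m l" and i: "1 \<le> i" "i + 1 \<le> m"
  and hA: "dsl_H m l ` dsl_A m l i = {p}"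
  and n1: "\<not> set_less (set_shift (dsl_J m l (dsl_B m l i)) (-1/2)) (dsl_J m l (dsl_A m l i))"
  and n2: "\<not> set_less (dsl_J m l (dsl_A m l i)) (set_shift (dsl_J m l (dsl_B m l (i + 1))) (-1/2))"
  shows False
proof -
  have im: "i \<le> m" using i by simp
  have JA: "dsl_J m l (dsl_A m l i) = {p}" using J_sing[OF hA] .
  obtain x where x: "x \<in> dsl_J m l (dsl_B m l i)" "x - 1/2 \<ge> p"
    using n1 unfolding JA set_less_def set_shift_def by force
  have approx1: "\<exists>y\<in>dsl_B m l i. dsl_H m l y > p + 1/2 - e" if e: "e > 0" for e
  proof (rule ccontr)
    assume "\<not> ?thesis"
    then have "dsl_J m l (dsl_B m l i) \<subseteq> {..p + 1/2 - e}" by (intro J_upper) force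
    then show False using x e by auto
  qed
  obtain x2 where x2: "x2 \<in> dsl_J m l (dsl_B m l (i+1))" "p \<ge> x2 - 1/2"
    using n2 unfolding JA set_less_def set_shift_def by force
  define b where "b = al l (m+1) + be m l (i+1)"
  have bB: "b \<in> dsl_B m l (i+1)" unfolding b_def using B_eq[of "i+1" m l] be_strict[OF V, of "i+1"] i by auto
  have br: "0 \<le> b" "b < 1" using B_range[OF V _ _ bB] i by auto
  have "dsl_J m l (dsl_B m l (i+1)) \<subseteq> {dsl_H m l b..}"
  proof (rule J_lower)
    fix y assume y: "y \<in> dsl_B m l (i+1)"
    have "b \<le> y" using y B_eq[of "i+1" m l] unfolding b_def by auto
    then show "dsl_H m l b \<le> dsl_H m l y" using H_mono[OF V br(1) _ conjunct2[OF B_range[OF V _ _ y]]] i by auto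
  qed
  then have Hb: "dsl_H m l b \<le> p + 1/2" using x2 by auto
  define a where "a = al l i"
  have aA: "a \<in> dsl_A m l i" unfolding a_def using A_eq[of i m l] al_strict[OF V, of i] i by auto
  have ar: "0 \<le> a" "a < 1" using A_range[OF V i(1) im aA] by auto
  have Ta: "dsl_T m l a = al l i + be m l (Suc i)" using T_A[OF V i(1) im aA] unfolding a_def by simp
  have Tb: "dsl_T m l b = al l (i+1) + be m l (i+1)" using T_B[OF V _ _ bB] i unfolding b_def by simp
  have Ha: "dsl_H m l a = p" using hA aA by auto
  have Hz: "dsl_H m l (dsl_T m l a) = 2*p" using HA[OF V i(1) im aA] Ha by simp
  have Hw: "dsl_H m l (dsl_T m l b) \<le> 2*p" using HB[OF _ _ bB] Hb i by simp
  have zw: "dsl_T m l a < dsl_T m l b" unfolding Ta Tb using al_strict[OF V, of i] i by simp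
  have wr: "0 \<le> dsl_T m l b" "dsl_T m l b < 1" using T_range[OF V br] by auto
  have zr: "0 \<le> dsl_T m l a" using T_range[OF V ar] by auto
  have "dsl_H m l (dsl_T m l a) \<le> dsl_H m l (dsl_T m l b)" using H_mono[OF V zr _ wr(2)] zw by simp
  then have Heq: "dsl_H m l (dsl_T m l a) = dsl_H m l (dsl_T m l b)" using Hz Hw by simp
  define dl where "dl = be m l (Suc i) - be m l i"
  have dl: "dl > 0" unfolding dl_def using be_strict[OF V i(1) im] by simp
  show False
  proof (rule core[OF V ar wr(2) zw Heq dl])
    fix u assume u: "0 \<le> u" "u < a" "(u \<in> dsl_Bset m l) = (a \<in> dsl_Bset m l)"
    have uB: "u \<notin> dsl_Bset m l" using u(3) A_notBset[OF V i(1) im aA] by simp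
    obtain j where j: "j \<in> {1..m}" "al l j \<le> u" "u < al l (Suc j)" "dsl_T m l u = u + be m l (Suc j)"
      using cls[OF V u(1)] u ar uB by auto
    have "j < i"
    proof (rule ccontr)
      assume "\<not> j < i"
      then have "al l i \<le> al l j" using al_mono[OF V] j by auto
      then show False using j u unfolding a_def by auto
    qed
    then have "be m l (Suc j) \<le> be m l i" using be_mono[OF V] i by auto
    moreover have "a = al l i" by (simp add: a_def)
    ultimately show "dsl_T m l a - dsl_T m l u \<ge> a - u + dl" using j(4) Ta unfolding dl_def by linarith
  next
    fix e :: real assume e: "e > 0"
    obtain y where y: "y \<in> dsl_B m l i" "dsl_H m l y > p + 1/2 - e/2" using approx1[of "e/2"] e by auto
    have yr: "0 \<le> y" "y < 1" using B_range[OF V i(1) im y(1)] by auto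
    have Ty: "dsl_T m l y = y - al l (m+1) + al l i" using T_B[OF V i(1) im y(1)] .
    have "y < al l (m+1) + be m l (Suc i)" using y(1) B_eq[of i m l] i by auto
    then have lt: "dsl_T m l y < dsl_T m l a" unfolding Ty Ta by simp
    have "dsl_H m l (dsl_T m l y) > 2*p - e" using HB[OF i(1) im y(1)] y(2) by simp
    then show "\<exists>y. 0 \<le> y \<and> y < dsl_T m l a \<and> dsl_H m l (dsl_T m l a) - dsl_H m l y < e"
      using lt T_range[OF V yr] Hz by (intro exI[of _ "dsl_T m l y"]) auto
  qed
qed

lemma part2: assumes V: "dsl_valid m l" and i: "2 \<le> i" "i \<le> m"
  and hB: "dsl_H m l ` dsl_B m l i = {p}"
  and n1: "\<not> set_less (set_shift (dsl_J m l (dsl_A m l (i - 1))) (1/2)) (dsl_J m l (dsl_B m l i))"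
  and n2: "\<not> set_less (dsl_J m l (dsl_B m l i)) (set_shift (dsl_J m l (dsl_A m l i)) (1/2))"
  shows False
proof -
  have i1: "1 \<le> i" "1 \<le> i - 1" "i - 1 \<le> m" "Suc (i - 1) = i" using i by auto
  have JB: "dsl_J m l (dsl_B m l i) = {p}" using J_sing[OF hB] .
  obtain x where x: "x \<in> dsl_J m l (dsl_A m l (i - 1))" "x + 1/2 \<ge> p"
    using n1 unfolding JB set_less_def set_shift_def by force
  have approx1: "\<exists>y\<in>dsl_A m l (i - 1). dsl_H m l y > p - 1/2 - e" if e: "e > 0" for e
  proof (rule ccontr)
    assume "\<not> ?thesis"
    then have "dsl_J m l (dsl_A m l (i - 1)) \<subseteq> {..p - 1/2 - e}" by (intro J_upper) force
    then show False using x e by auto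
  qed
  obtain x2 where x2: "x2 \<in> dsl_J m l (dsl_A m l i)" "p \<ge> x2 + 1/2"
    using n2 unfolding JB set_less_def set_shift_def by force
  define b where "b = al l i"
  have bA: "b \<in> dsl_A m l i" unfolding b_def using A_eq[of i m l] al_strict[OF V, of i] i by auto
  have br: "0 \<le> b" "b < 1" using A_range[OF V i1(1) i(2) bA] by auto
  have "dsl_J m l (dsl_A m l i) \<subseteq> {dsl_H m l b..}"
  proof (rule J_lower)
    fix y assume y: "y \<in> dsl_A m l i"
    have "b \<le> y" using y A_eq[of i m l] i unfolding b_def by auto
    then show "dsl_H m l b \<le> dsl_H m l y" using H_mono[OF V br(1) _ conjunct2[OF A_range[OF V i1(1) i(2) y]]] by auto
  qed
  then have Hb: "dsl_H m l b \<le> p - 1/2" using x2 by auto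
  define a where "a = al l (m+1) + be m l i"
  have aB: "a \<in> dsl_B m l i" unfolding a_def using B_eq[of i m l] be_strict[OF V, of i] i by auto
  have ar: "0 \<le> a" "a < 1" using B_range[OF V i1(1) i(2) aB] by auto
  have Ta: "dsl_T m l a = al l i + be m l i" using T_B[OF V i1(1) i(2) aB] unfolding a_def by simp
  have Tb: "dsl_T m l b = al l i + be m l (Suc i)" using T_A[OF V i1(1) i(2) bA] unfolding b_def by simp
  have Ha: "dsl_H m l a = p" using hB aB by auto
  have Hz: "dsl_H m l (dsl_T m l a) = 2*p - 1" using HB[OF i1(1) i(2) aB] Ha by simp
  have Hw: "dsl_H m l (dsl_T m l b) \<le> 2*p - 1" using HA[OF V i1(1) i(2) bA] Hb by simp
  have zw: "dsl_T m l a < dsl_T m l b" unfolding Ta Tb using be_strict[OF V i1(1) i(2)] by simp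
  have wr: "0 \<le> dsl_T m l b" "dsl_T m l b < 1" using T_range[OF V br] by auto
  have zr: "0 \<le> dsl_T m l a" using T_range[OF V ar] by auto
  have "dsl_H m l (dsl_T m l a) \<le> dsl_H m l (dsl_T m l b)" using H_mono[OF V zr _ wr(2)] zw by simp
  then have Heq: "dsl_H m l (dsl_T m l a) = dsl_H m l (dsl_T m l b)" using Hz Hw by simp
  define dl where "dl = al l i - al l (i - 1)"
  have dl: "dl > 0" unfolding dl_def using al_strict[OF V i1(2), of] i1 i by simp
  show False
  proof (rule core[OF V ar wr(2) zw Heq dl])
    fix u assume u: "0 \<le> u" "u < a" "(u \<in> dsl_Bset m l) = (a \<in> dsl_Bset m l)"
    have uB: "u \<in> dsl_Bset m l" using u(3) B_Bset[OF i1(1) i(2) aB] by simp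
    obtain j where j: "j \<in> {1..m}" "al l (m+1) + be m l j \<le> u" "dsl_T m l u = u - al l (m+1) + al l j"
      using cls[OF V u(1)] u ar uB by auto
    have "j < i"
    proof (rule ccontr)
      assume "\<not> j < i"
      then have "be m l i \<le> be m l j" using be_mono[OF V] j by auto
      then show False using j u unfolding a_def by auto
    qed
    then have "al l j \<le> al l (i - 1)" using al_mono[OF V] i by auto
    moreover have "a = al l (m+1) + be m l i" by (simp add: a_def)
    ultimately show "dsl_T m l a - dsl_T m l u \<ge> a - u + dl" using j(3) Ta unfolding dl_def by linarith
  next
    fix e :: real assume e: "e > 0"
    obtain y where y: "y \<in> dsl_A m l (i - 1)" "dsl_H m l y > p - 1/2 - e/2" using approx1[of "e/2"] e by auto
    have yr: "0 \<le> y" "y < 1" using A_range[OF V i1(2) i1(3) y(1)] by auto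
    have Ty: "dsl_T m l y = y + be m l i" using T_A[OF V i1(2) i1(3) y(1)] i1(4) by simp
    have "y < al l i" using y(1) A_eq[of "i - 1" m l] i1 by auto
    then have lt: "dsl_T m l y < dsl_T m l a" unfolding Ty Ta by simp
    have "dsl_H m l (dsl_T m l y) > 2*p - 1 - e" using HA[OF V i1(2) i1(3) y(1)] y(2) by simp
    then show "\<exists>y. 0 \<le> y \<and> y < dsl_T m l a \<and> dsl_H m l (dsl_T m l a) - dsl_H m l y < e"
      using lt T_range[OF V yr] Hz by (intro exI[of _ "dsl_T m l y"]) auto
  qed
qed

lemma part3: assumes V: "dsl_valid m l"
  and h: "dsl_H m l ` (dsl_A m l m \<union> dsl_B m l 1) = {p}"
  shows False
proof -
  have m: "1 \<le> m" using V unfolding dsl_valid_def by simp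
  have xA: "al l m \<in> dsl_A m l m" using A_eq[of m m l] al_strict[OF V m] m by auto
  have yB: "al l (m+1) \<in> dsl_B m l 1" using B_eq[of 1 m l] be_strict[OF V _ m] by auto
  have "dsl_H m l (al l m) = p" "dsl_H m l (al l (m+1)) = p" using h xA yB by auto
  moreover have "dsl_H m l (al l m) \<le> 1/2" using HA[OF V m _ xA] H_bounds[of m l "dsl_T m l (al l m)"] by simp
  moreover have e: "dsl_H m l (al l (m+1)) = 1/2 + dsl_H m l (dsl_T m l (al l (m+1))) / 2" using HB[OF _ m yB] by simp
  moreover have "dsl_H m l (dsl_T m l (al l (m+1))) \<ge> 0" using H_bounds by blast
  ultimately have H0: "dsl_H m l (dsl_T m l (al l (m+1))) = 0" by linarith
  have yr: "0 \<le> al l (m+1)" "al l (m+1) < 1" using B_range[OF V _ m yB] by auto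
  have tr: "0 \<le> dsl_T m l (al l (m+1))" "dsl_T m l (al l (m+1)) < 1" using T_range[OF V yr] by auto
  obtain N where N: "N > 0" "dg m l (dsl_T m l (al l (m+1))) N" using NEA[OF V tr, of 0] by auto
  have "dsl_H m l (dsl_T m l (al l (m+1))) \<ge> 1 / 2^(N+1)" using H_lower[OF N(2)] .
  moreover have "(0::real) < 1 / 2^(N+1)" by simp
  ultimately show False using H0 by linarith
qed

theorem proposition4:
  fixes m :: nat and l :: "nat \<Rightarrow> real"
  assumes "dsl_valid m l"
  shows
   "(\<forall>i. 1 \<le> i \<and> i \<le> m - 1 \<and> (\<exists>p. dsl_H m l ` dsl_A m l i = {p}) \<longrightarrow>
       set_less (set_shift (dsl_J m l (dsl_B m l i)) (-1/2)) (dsl_J m l (dsl_A m l i)) \<or>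
       set_less (dsl_J m l (dsl_A m l i)) (set_shift (dsl_J m l (dsl_B m l (i + 1))) (-1/2)))
    \<and> (\<forall>i. 2 \<le> i \<and> i \<le> m \<and> (\<exists>p. dsl_H m l ` dsl_B m l i = {p}) \<longrightarrow>
       set_less (set_shift (dsl_J m l (dsl_A m l (i - 1))) (1/2)) (dsl_J m l (dsl_B m l i)) \<or>
       set_less (dsl_J m l (dsl_B m l i)) (set_shift (dsl_J m l (dsl_A m l i)) (1/2)))
    \<and> ((\<exists>p. dsl_H m l ` (dsl_A m l m \<union> dsl_B m l 1) = {p}) \<longrightarrow>
       set_less (set_shift (dsl_J m l (dsl_B m l m)) (-1/2)) (dsl_J m l (dsl_A m l m \<union> dsl_B m l 1)) \<or>
       set_less (dsl_J m l (dsl_A m l m \<union> dsl_B m l 1)) (set_shift (dsl_J m l (dsl_A m l 1)) (1/2)))"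
proof (intro conjI allI impI)
  fix i assume h: "1 \<le> i \<and> i \<le> m - 1 \<and> (\<exists>p. dsl_H m l ` dsl_A m l i = {p})"
  then obtain p where p: "dsl_H m l ` dsl_A m l i = {p}" by blast
  have i: "1 \<le> i" "i + 1 \<le> m" using h by auto
  show "set_less (set_shift (dsl_J m l (dsl_B m l i)) (-1/2)) (dsl_J m l (dsl_A m l i)) \<or>
       set_less (dsl_J m l (dsl_A m l i)) (set_shift (dsl_J m l (dsl_B m l (i + 1))) (-1/2))"
    using part1[OF assms i p] by blast
next
  fix i assume h: "2 \<le> i \<and> i \<le> m \<and> (\<exists>p. dsl_H m l ` dsl_B m l i = {p})"
  then obtain p where p: "dsl_H m l ` dsl_B m l i = {p}" by blast
  have i: "2 \<le> i" "i \<le> m" using h by auto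
  show "set_less (set_shift (dsl_J m l (dsl_A m l (i - 1))) (1/2)) (dsl_J m l (dsl_B m l i)) \<or>
       set_less (dsl_J m l (dsl_B m l i)) (set_shift (dsl_J m l (dsl_A m l i)) (1/2))"
    using part2[OF assms i p] by blast
next
  assume "\<exists>p. dsl_H m l ` (dsl_A m l m \<union> dsl_B m l 1) = {p}"
  then obtain p where p: "dsl_H m l ` (dsl_A m l m \<union> dsl_B m l 1) = {p}" by blast
  show "set_less (set_shift (dsl_J m l (dsl_B m l m)) (-1/2)) (dsl_J m l (dsl_A m l m \<union> dsl_B m l 1)) \<or>
       set_less (dsl_J m l (dsl_A m l m \<union> dsl_B m l 1)) (set_shift (dsl_J m l (dsl_A m l 1)) (1/2))"
    using part3[OF assms p] by blast
qed


end
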